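(* Let $M$ be a matroid on $E$, $\mathfrak{S}\subseteq\mathcal{P}(E)$ and $Z\in\mathfrak{S}$. Then: (1) $\mathrm{ec}_{\mathfrak{S}}(M)-\mathrm{ec}_{\mathfrak{S}-\{Z\}}(M)=a_{\mathfrak{S}}(Z)\,b_{\mathfrak{S}}(Z)$; (2) for every $S\in\mathfrak{S}-\{Z\}$, $a_{\mathfrak{S}}(S)-a_{\mathfrak{S}-\{Z\}}(S)=a_{\mathfrak{S}}(Z)\,\mu_{\mathfrak{S}}(Z,S)$; (3) for every $S\in\mathfrak{S}-\{Z\}$, $b_{\mathfrak{S}}(S)-b_{\mathfrak{S}-\{Z\}}(S)=\mu_{\mathfrak{S}}(S,Z)\,b_{\mathfrak{S}}(Z)$.
   Context: $M$ has rank $k$. For $\mathfrak{T}\subseteq\mathcal{P}(E)$, viewed as a poset under inclusion with Möbius function $\mu_{\mathfrak{T}}$: $c(T)=\#T-\mathrm{rk}\,T$; $a_{\mathfrak{T}}(S)=\sum_{T\in\mathfrak{T}}c(T)\mu_{\mathfrak{T}}(T,S)$ (equivalently $a_{\mathfrak{T}}(S)=c(S)-\sum_{T\in\mathfrak{T},T\subsetneq S}a_{\mathfrak{T}}(T)$); $b_{\mathfrak{T}}(T)=\sum_{S\in\mathfrak{T}}(k-\mathrm{rk}\,S)\mu_{\mathfrak{T}}(T,S)$; $\mathrm{ec}_{\mathfrak{T}}(M)=\sum_{S\in\mathfrak{T}}(k-\mathrm{rk}\,S)a_{\mathfrak{T}}(S)$. *)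

theory Defs
  imports Main
begin

definition matroid :: "'a set \<Rightarrow> ('a set \<Rightarrow> bool) \<Rightarrow> bool" where
  "matroid E indep \<longleftrightarrow>
     finite E \<and>
     (\<forall>I. indep I \<longrightarrow> I \<subseteq> E) \<and>
     indep {} \<and>
     (\<forall>I J. indep J \<and> I \<subseteq> J \<longrightarrow> indep I) \<and>
     (\<forall>I J. indep I \<and> indep J \<and> card I < card J \<longrightarrow>
        (\<exists>x \<in> J - I. indep (insert x I)))"

definition mrank :: "('a set \<Rightarrow> bool) \<Rightarrow> 'a set \<Rightarrow> nat" where
  "mrank indep X = Max {card I | I. I \<subseteq> X \<and> indep I}"

function mobius :: "'a set set \<Rightarrow> 'a set \<Rightarrow> 'a set \<Rightarrow> int" where
  "mobius F x y =
     (if finite F \<and> x \<in> F \<and> y \<in> F \<and> x \<subseteq> y then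
        (if x = y then 1 else - (\<Sum>z\<in>{z\<in>F. x \<subseteq> z \<and> z \<subset> y}. mobius F x z))
      else 0)"
  by auto
termination
proof (relation "measure (\<lambda>(F,x,y). card {w\<in>F. w \<subset> y})")
  show "wf (measure (\<lambda>(F,x,y). card {w\<in>F. w \<subset> y}))" by simp
next
  fix F :: "'a set set" and x y z
  assume a: "finite F \<and> x \<in> F \<and> y \<in> F \<and> x \<subseteq> y" "x \<noteq> y"
     and z: "z \<in> {z\<in>F. x \<subseteq> z \<and> z \<subset> y}"
  have "{w\<in>F. w \<subset> z} \<subset> {w\<in>F. w \<subset> y}"
    using z by auto
  moreover have "finite {w\<in>F. w \<subset> y}" using a by auto
  ultimately have "card {w\<in>F. w \<subset> z} < card {w\<in>F. w \<subset> y}"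
    by (rule psubset_card_mono[rotated])
  then show "((F, x, z), F, x, y) \<in> measure (\<lambda>(F,x,y). card {w\<in>F. w \<subset> y})"
    by simp
qed

declare mobius.simps[simp del]

definition cval :: "('a set \<Rightarrow> bool) \<Rightarrow> 'a set \<Rightarrow> int" where
  "cval indep T = int (card T) - int (mrank indep T)"

definition aval :: "('a set \<Rightarrow> bool) \<Rightarrow> 'a set set \<Rightarrow> 'a set \<Rightarrow> int" where
  "aval indep \<T> S = (\<Sum>T\<in>\<T>. cval indep T * mobius \<T> T S)"

definition bval :: "'a set \<Rightarrow> ('a set \<Rightarrow> bool) \<Rightarrow> 'a set set \<Rightarrow> 'a set \<Rightarrow> int" where
  "bval E indep \<T> T = (\<Sum>S\<in>\<T>. (int (mrank indep E) - int (mrank indep S)) * mobius \<T> T S)"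

definition ec :: "'a set \<Rightarrow> ('a set \<Rightarrow> bool) \<Rightarrow> 'a set set \<Rightarrow> int" where
  "ec E indep \<T> = (\<Sum>S\<in>\<T>. (int (mrank indep E) - int (mrank indep S)) * aval indep \<T> S)"

end

theory Submission
  imports Defs
begin

lemma mob_rec: "finite F \<Longrightarrow> x \<in> F \<Longrightarrow> y \<in> F \<Longrightarrow> x \<subseteq> y \<Longrightarrow> x \<noteq> y \<Longrightarrow>
  mobius F x y = - (\<Sum>z\<in>{z\<in>F. x \<subseteq> z \<and> z \<subset> y}. mobius F x z)"
  by (subst mobius.simps) auto

lemma mob_refl: "finite F \<Longrightarrow> x \<in> F \<Longrightarrow> mobius F x x = 1"
  by (subst mobius.simps) auto

lemma mob_zero: "\<not> (finite F \<and> x \<in> F \<and> y \<in> F \<and> x \<subseteq> y) \<Longrightarrow> mobius F x y = 0"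
  by (subst mobius.simps) auto

lemma mob_nz: "mobius F x y \<noteq> 0 \<Longrightarrow> finite F \<and> x \<in> F \<and> y \<in> F \<and> x \<subseteq> y"
  using mob_zero by blast

lemma mob_prod_zero: "x \<noteq> Z \<Longrightarrow> (\<not> x \<subseteq> y \<or> x = y) \<Longrightarrow> mobius F x Z * mobius F Z y = 0"
proof (rule ccontr)
  assume a: "x \<noteq> Z" "\<not> x \<subseteq> y \<or> x = y" "mobius F x Z * mobius F Z y \<noteq> 0"
  then have "x \<subseteq> Z" "Z \<subseteq> y" using mob_nz by auto
  then show False using a by auto
qed

lemma mobius_delete_aux:
  "G = F - {Z} \<Longrightarrow> finite F \<Longrightarrow> Z \<in> F \<Longrightarrow> x \<noteq> Z \<Longrightarrow> y \<noteq> Z \<Longrightarrow>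
   mobius G x y = mobius F x y - mobius F x Z * mobius F Z y"
proof (induction G x y rule: mobius.induct)
  case (1 G x y)
  note IH = "1.IH"
  have fG: "finite G" using "1.prems" by auto
  show ?case
  proof (cases "x \<in> G \<and> y \<in> G \<and> x \<subseteq> y")
    case False
    then have L: "mobius G x y = 0" using mob_zero by blast
    have "mobius F x y = 0" using False "1.prems" mob_zero by blast
    moreover have "mobius F x Z * mobius F Z y = 0"
    proof (cases "x \<subseteq> y")
      case True
      then have "x \<notin> F \<or> y \<notin> F" using False "1.prems" by auto
      then show ?thesis using mob_zero by auto
    next
      case False
      show ?thesis by (rule mob_prod_zero) (use False "1.prems" in auto)
    qed
    ultimately show ?thesis using L by simp
  next
    case True
    show ?thesis
    proof (cases "x = y")
      case True
      have xG: "x \<in> G" using \<open>x \<in> G \<and> y \<in> G \<and> x \<subseteq> y\<close> by blast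
      have a1: "mobius G x y = 1" using True mob_refl[OF fG xG] by simp
      have a2: "mobius F x y = 1" using True mob_refl[of F x] xG "1.prems" by auto
      have a3: "mobius F x Z * mobius F Z y = 0" by (rule mob_prod_zero) (use True "1.prems" in auto)
      show ?thesis using a1 a2 a3 by simp
    next
      case ne: False
      define \<nu> where "\<nu> z = mobius F x z - mobius F x Z * mobius F Z z" for z
      define AF where "AF = {z\<in>F. x \<subseteq> z \<and> z \<subset> y}"
      have AG: "{z\<in>G. x \<subseteq> z \<and> z \<subset> y} = AF - {Z}" using "1.prems" by (auto simp: AF_def)
      have yG: "y \<in> F" using \<open>x \<in> G \<and> y \<in> G \<and> x \<subseteq> y\<close> "1.prems" by blast
      have fAF: "finite AF" using "1.prems" by (auto simp: AF_def)
      have "mobius G x y = - (\<Sum>z\<in>{z\<in>G. x \<subseteq> z \<and> z \<subset> y}. mobius G x z)"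
        using mob_rec fG True ne by blast
      also have "(\<Sum>z\<in>{z\<in>G. x \<subseteq> z \<and> z \<subset> y}. mobius G x z) = (\<Sum>z\<in>AF - {Z}. \<nu> z)"
        unfolding AG[symmetric]
      proof (rule sum.cong[OF refl])
        fix z assume z: "z \<in> {z\<in>G. x \<subseteq> z \<and> z \<subset> y}"
        have "z \<noteq> Z" using z "1.prems" by blast
        then show "mobius G x z = \<nu> z" unfolding \<nu>_def
          using IH[OF _ ne z] fG True "1.prems" by blast
      qed
      also have "\<dots> = (\<Sum>z\<in>AF. \<nu> z)"
        using mob_refl[of F Z] "1.prems" by (auto simp: sum_diff1 fAF \<nu>_def)
      also have "\<dots> = (\<Sum>z\<in>AF. mobius F x z) - mobius F x Z * (\<Sum>z\<in>AF. mobius F Z z)"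
        by (simp add: \<nu>_def sum_subtractf sum_distrib_left)
      also have "(\<Sum>z\<in>AF. mobius F x z) = - mobius F x y"
        using mob_rec[of F x y] "1.prems" True ne by (auto simp: AF_def)
      also have "mobius F x Z * (\<Sum>z\<in>AF. mobius F Z z) = - mobius F x Z * mobius F Z y"
      proof (cases "mobius F x Z = 0")
        case True then show ?thesis by simp
      next
        case False
        then have xZ: "x \<subseteq> Z" "Z \<in> F" using mob_nz by auto
        show ?thesis
        proof (cases "Z \<subseteq> y")
          case True
          have "(\<Sum>z\<in>AF. mobius F Z z) = (\<Sum>z\<in>{z\<in>F. Z \<subseteq> z \<and> z \<subset> y}. mobius F Z z)"
            by (rule sum.mono_neutral_right) (use fAF xZ mob_nz in \<open>fastforce simp: AF_def\<close>)+
          also have "\<dots> = - mobius F Z y"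
            using mob_rec[of F Z y] True "1.prems" xZ yG by auto
          finally show ?thesis by simp
        next
          case False
          have "(\<Sum>z\<in>AF. mobius F Z z) = 0"
            using False by (auto simp: AF_def intro!: sum.neutral mob_zero)
          moreover have "mobius F Z y = 0" using False mob_zero by blast
          ultimately show ?thesis by simp
        qed
      qed
      finally show ?thesis by simp
    qed
  qed
qed

lemma mobius_delete:
  "finite F \<Longrightarrow> Z \<in> F \<Longrightarrow> x \<noteq> Z \<Longrightarrow> y \<noteq> Z \<Longrightarrow>
   mobius (F - {Z}) x y = mobius F x y - mobius F x Z * mobius F Z y"
  using mobius_delete_aux by blast

theorem proposition6p3:
  fixes E :: "'a set" and indep :: "'a set \<Rightarrow> bool" and \<S> :: "'a set set" and Z :: "'a set"
  assumes "matroid E indep"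
    and "\<S> \<subseteq> Pow E"
    and "Z \<in> \<S>"
  shows "ec E indep \<S> - ec E indep (\<S> - {Z}) = aval indep \<S> Z * bval E indep \<S> Z
         \<and> (\<forall>S \<in> \<S> - {Z}. aval indep \<S> S - aval indep (\<S> - {Z}) S = aval indep \<S> Z * mobius \<S> Z S)
         \<and> (\<forall>S \<in> \<S> - {Z}. bval E indep \<S> S - bval E indep (\<S> - {Z}) S = mobius \<S> S Z * bval E indep \<S> Z)"
proof -
  have fE: "finite E" using assms(1) by (simp add: matroid_def)
  have fin: "finite \<S>" using assms(2) fE by (meson finite_Pow_iff finite_subset)
  define G where "G = \<S> - {Z}"
  define c where "c T = cval indep T" for T
  define w where "w S = int (mrank indep E) - int (mrank indep S)" for S
  have fG: "finite G" using fin by (simp add: G_def)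
  have mZ: "mobius \<S> Z Z = 1" using mob_refl fin assms(3) by blast
  have P2: "\<forall>S \<in> G. aval indep \<S> S - aval indep G S = aval indep \<S> Z * mobius \<S> Z S"
  proof
    fix S assume S: "S \<in> G"
    have "aval indep \<S> S = c Z * mobius \<S> Z S + (\<Sum>T\<in>G. c T * mobius \<S> T S)"
      unfolding aval_def c_def G_def using sum.remove[OF fin assms(3)] by blast
    moreover have "aval indep G S = (\<Sum>T\<in>G. c T * mobius \<S> T S)
         - (\<Sum>T\<in>G. c T * mobius \<S> T Z) * mobius \<S> Z S"
    proof -
      have "aval indep G S = (\<Sum>T\<in>G. c T * mobius \<S> T S - c T * mobius \<S> T Z * mobius \<S> Z S)"
        unfolding aval_def c_def
        by (rule sum.cong[OF refl]) (use S in \<open>simp add: mobius_delete[OF fin assms(3)] G_def right_diff_distrib\<close>)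
      also have "\<dots> = (\<Sum>T\<in>G. c T * mobius \<S> T S) - (\<Sum>T\<in>G. c T * mobius \<S> T Z) * mobius \<S> Z S"
        by (simp add: sum_subtractf sum_distrib_right)
      finally show ?thesis .
    qed
    moreover have "aval indep \<S> Z = c Z + (\<Sum>T\<in>G. c T * mobius \<S> T Z)"
      unfolding aval_def c_def G_def by (simp add: sum.remove[OF fin assms(3)] mZ)
    ultimately show "aval indep \<S> S - aval indep G S = aval indep \<S> Z * mobius \<S> Z S"
      by (simp add: algebra_simps)
  qed
  have P3: "\<forall>S \<in> G. bval E indep \<S> S - bval E indep G S = mobius \<S> S Z * bval E indep \<S> Z"
  proof
    fix S assume S: "S \<in> G"
    have "bval E indep \<S> S = w Z * mobius \<S> S Z + (\<Sum>T\<in>G. w T * mobius \<S> S T)"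
      unfolding bval_def w_def G_def using sum.remove[OF fin assms(3)] by blast
    moreover have "bval E indep G S = (\<Sum>T\<in>G. w T * mobius \<S> S T)
         - mobius \<S> S Z * (\<Sum>T\<in>G. w T * mobius \<S> Z T)"
    proof -
      have "bval E indep G S = (\<Sum>T\<in>G. w T * mobius \<S> S T - mobius \<S> S Z * (w T * mobius \<S> Z T))"
        unfolding bval_def w_def
        by (rule sum.cong[OF refl]) (use S in \<open>simp add: mobius_delete[OF fin assms(3)] G_def algebra_simps\<close>)
      also have "\<dots> = (\<Sum>T\<in>G. w T * mobius \<S> S T) - mobius \<S> S Z * (\<Sum>T\<in>G. w T * mobius \<S> Z T)"
        by (simp add: sum_subtractf sum_distrib_left)
      finally show ?thesis .
    qed
    moreover have "bval E indep \<S> Z = w Z + (\<Sum>T\<in>G. w T * mobius \<S> Z T)"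
      unfolding bval_def w_def G_def by (simp add: sum.remove[OF fin assms(3)] mZ)
    ultimately show "bval E indep \<S> S - bval E indep G S = mobius \<S> S Z * bval E indep \<S> Z"
      by (simp add: algebra_simps)
  qed
  have P1: "ec E indep \<S> - ec E indep G = aval indep \<S> Z * bval E indep \<S> Z"
  proof -
    have "ec E indep \<S> = w Z * aval indep \<S> Z + (\<Sum>S\<in>G. w S * aval indep \<S> S)"
      unfolding ec_def w_def G_def using sum.remove[OF fin assms(3)] by blast
    moreover have "ec E indep G = (\<Sum>S\<in>G. w S * aval indep \<S> S)
        - aval indep \<S> Z * (\<Sum>S\<in>G. w S * mobius \<S> Z S)"
    proof -
      have "ec E indep G = (\<Sum>S\<in>G. w S * aval indep \<S> S - aval indep \<S> Z * (w S * mobius \<S> Z S))"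
        unfolding ec_def
      proof (rule sum.cong[OF refl])
        fix S assume S: "S \<in> G"
        have h: "aval indep G S = aval indep \<S> S - aval indep \<S> Z * mobius \<S> Z S"
          using P2 S by (simp add: algebra_simps)
        then show "(int (mrank indep E) - int (mrank indep S)) * aval indep G S =
            w S * aval indep \<S> S - aval indep \<S> Z * (w S * mobius \<S> Z S)"
          unfolding h w_def by (simp add: algebra_simps)
      qed
      also have "\<dots> = (\<Sum>S\<in>G. w S * aval indep \<S> S) - aval indep \<S> Z * (\<Sum>S\<in>G. w S * mobius \<S> Z S)"
        by (simp add: sum_subtractf sum_distrib_left)
      finally show ?thesis .
    qed
    moreover have "bval E indep \<S> Z = w Z + (\<Sum>T\<in>G. w T * mobius \<S> Z T)"
      unfolding bval_def w_def G_def by (simp add: sum.remove[OF fin assms(3)] mZ)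
    ultimately show ?thesis by (simp add: algebra_simps)
  qed
  show ?thesis using P1 P2 P3 unfolding G_def by blast
qed

end
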